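(* Every cohesive almost zero-dimensional subspace of $\mathfrak C\times\mathbb R$ is nowhere dense in $\mathfrak C\times\mathbb R$.
   Context: $\mathfrak C$ denotes the middle-third Cantor set in $[0,1]$. A subset $A$ of a space $X$ is a C-set in $X$ if $A$ is an intersection of clopen subsets of $X$. A space $X$ is almost zero-dimensional if every point of $X$ has a neighborhood basis consisting of C-sets in $X$. A space $X$ is cohesive if every point $x\in X$ has a neighborhood which contains no non-empty clopen subset of $X$. *)

theory Defs
  imports "HOL-Analysis.Analysis"
begin

fun cantor_stage :: "nat \<Rightarrow> real set" where
  "cantor_stage 0 = {0..1}"
| "cantor_stage (Suc n) = (\<lambda>x. x / 3) ` cantor_stage n \<union> (\<lambda>x. x / 3 + 2 / 3) ` cantor_stage n"

definition cantor_set :: "real set" where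
  "cantor_set = (\<Inter>n. cantor_stage n)"

definition C_set :: "'a topology \<Rightarrow> 'a set \<Rightarrow> bool" where
  "C_set X A \<longleftrightarrow> (\<exists>\<F>. (\<forall>U\<in>\<F>. openin X U \<and> closedin X U) \<and> A = topspace X \<inter> \<Inter>\<F>)"

definition is_nbhd :: "'a topology \<Rightarrow> 'a \<Rightarrow> 'a set \<Rightarrow> bool" where
  "is_nbhd X x N \<longleftrightarrow> N \<subseteq> topspace X \<and> (\<exists>W. openin X W \<and> x \<in> W \<and> W \<subseteq> N)"

definition almost_zero_dimensional :: "'a topology \<Rightarrow> bool" where
  "almost_zero_dimensional X \<longleftrightarrow>
     (\<forall>x\<in>topspace X. \<forall>N. is_nbhd X x N \<longrightarrow> (\<exists>V. C_set X V \<and> is_nbhd X x V \<and> V \<subseteq> N))"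

definition cohesive :: "'a topology \<Rightarrow> bool" where
  "cohesive X \<longleftrightarrow>
     (\<forall>x\<in>topspace X. \<exists>N. is_nbhd X x N \<and>
        \<not> (\<exists>A. A \<noteq> {} \<and> A \<subseteq> N \<and> openin X A \<and> closedin X A))"

end

theory Submission
  imports Defs
begin

lemma stage_compact: "compact (cantor_stage n)"
  by (induction n) (auto intro!: compact_Un compact_continuous_image continuous_intros)

lemma cantor_closed: "closed cantor_set"
  unfolding cantor_set_def using stage_compact by (simp add: closed_INT compact_imp_closed)

lemma notin_stage: "(real_of_int j + 1/2) / 3^n \<notin> cantor_stage (Suc n)"
proof (induction n arbitrary: j)
  case 0
  show ?case
  proof
    assume "(real_of_int j + 1/2) / 3^0 \<in> cantor_stage (Suc 0)"
    then have "(0 \<le> real_of_int j + 1/2 \<and> real_of_int j + 1/2 \<le> 1/3) \<or> (2/3 \<le> real_of_int j + 1/2 \<and> real_of_int j + 1/2 \<le> 1)"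
      by auto
    moreover have "j \<le> -1 \<or> j = 0 \<or> j \<ge> 1" by linarith
    ultimately show False by (auto simp del: of_int_le_iff)
  qed
next
  case (Suc n)
  have e: "(3::real)^(Suc n) = 3 * 3^n" by simp
  show ?case
  proof
    assume "(real_of_int j + 1/2) / 3^(Suc n) \<in> cantor_stage (Suc (Suc n))"
    then obtain z where z: "z \<in> cantor_stage (Suc n)" and
      "(real_of_int j + 1/2) / 3^(Suc n) = z/3 \<or> (real_of_int j + 1/2) / 3^(Suc n) = z/3 + 2/3"
      by (simp only: cantor_stage.simps(2)[of "Suc n"] image_iff Un_iff) blast
    then consider "z = (real_of_int j + 1/2) / 3^n" | "z = (real_of_int (j - 2*3^n) + 1/2) / 3^n"
      unfolding e by (auto simp: field_simps)
    then show False using z Suc.IH by metis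
  qed
qed

lemma notin_cantor: "(real_of_int j + 1/2) / 3^n \<notin> cantor_set"
  using notin_stage unfolding cantor_set_def by blast

lemma exists_above: assumes "e > 0" shows "\<exists>w. x < w \<and> w < x + e \<and> w \<notin> cantor_set"
proof -
  obtain n where n: "(1/3::real)^n < e/2" using real_arch_pow_inv[of "e/2" "1/3"] assms by auto
  have p: "(3::real)^n > 0" by simp
  define j where "j = \<lfloor>x * 3^n\<rfloor> + 1"
  have "real_of_int j > x*3^n" "real_of_int j \<le> x*3^n + 1" unfolding j_def by linarith+
  moreover have "1 < e/2 * 3^n" using n p by (simp add: power_divide field_simps)
  ultimately have "x < (real_of_int j + 1/2) / 3^n" "(real_of_int j + 1/2) / 3^n < x + e"
    using p by (simp_all add: field_simps)
  then show ?thesis using notin_cantor by blast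
qed

lemma exists_below: assumes "e > 0" shows "\<exists>w. x - e < w \<and> w < x \<and> w \<notin> cantor_set"
proof -
  obtain n where n: "(1/3::real)^n < e/2" using real_arch_pow_inv[of "e/2" "1/3"] assms by auto
  have p: "(3::real)^n > 0" by simp
  define j where "j = \<lceil>x * 3^n\<rceil> - 2"
  have "real_of_int j + 1 < x*3^n" "real_of_int j + 2 \<ge> x*3^n" unfolding j_def by linarith+
  moreover have "1 < e/2 * 3^n" using n p by (simp add: power_divide field_simps)
  ultimately have "x - e < (real_of_int j + 1/2) / 3^n" "(real_of_int j + 1/2) / 3^n < x"
    using p by (simp_all add: field_simps)
  then show ?thesis using notin_cantor by blast
qed

lemma dist_box: "\<bar>a - c\<bar> < r \<Longrightarrow> \<bar>b - d\<bar> < r \<Longrightarrow> dist (a,b) (c,d) < 2*r"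
  unfolding dist_Pair_Pair dist_real_def
  using sqrt_sum_squares_le_sum_abs[of "a-c" "b-d"] by (simp add: power2_abs)


lemma dense_pt: "z \<in> closure S \<Longrightarrow> open G \<Longrightarrow> z \<in> G \<Longrightarrow> \<exists>y\<in>S. y \<in> G"
  by (meson closure_iff_nhds_not_empty disjoint_iff order_refl)

lemma gap:
  fixes F X Op :: "(real \<times> real) set"
  assumes "closed F" "open Op" "u \<notin> cantor_set" "v \<notin> cantor_set"
    "c1 \<in> cantor_set" "u < c1" "c1 < v" "\<beta>1 < \<beta>2"
    "{u<..<v} \<times> {\<beta>1<..<\<beta>2} \<subseteq> Op"
    "\<forall>z\<in>(cantor_set \<times> UNIV) \<inter> Op. z \<in> closure X" "X \<subseteq> cantor_set \<times> UNIV"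
    "\<forall>c t. (c,t) \<in> X \<inter> F \<longrightarrow> t \<notin> {\<beta>1<..<\<beta>2}"
  shows "\<exists>u' v' h c'. u \<le> u' \<and> u' < c' \<and> c' < v' \<and> v' \<le> v \<and> u' \<notin> cantor_set \<and> v' \<notin> cantor_set
     \<and> c' \<in> cantor_set \<and> \<beta>1 < h \<and> h < \<beta>2 \<and> (\<forall>c. u' \<le> c \<and> c \<le> v' \<longrightarrow> (c,h) \<notin> F)"
proof -
  have "\<exists>c h. c \<in> cantor_set \<and> u < c \<and> c < v \<and> \<beta>1 < h \<and> h < \<beta>2 \<and> (c,h) \<notin> F"
  proof (rule ccontr)
    assume na: "\<not> ?thesis"
    define z where "z = (c1, (\<beta>1+\<beta>2)/2)"
    have zin: "z \<in> {u<..<v} \<times> {\<beta>1<..<\<beta>2}" using assms unfolding z_def by auto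
    then have "z \<in> Op" using assms(9) by blast
    then have "z \<in> closure X" using assms(5,10) unfolding z_def by auto
    moreover have "open ({u<..<v} \<times> {\<beta>1<..<\<beta>2})" by (simp add: open_Times)
    ultimately obtain y where "y \<in> X" "y \<in> {u<..<v} \<times> {\<beta>1<..<\<beta>2}"
      using dense_pt zin by blast
    moreover obtain c t where ct: "y = (c,t)" by fastforce
    ultimately have "c \<in> cantor_set" "u < c" "c < v" "\<beta>1 < t" "t < \<beta>2" "(c,t) \<in> X"
      using assms(11) by auto
    then have "(c,t) \<in> F" using na by blast
    then show False using assms(12) \<open>(c,t) \<in> X\<close> \<open>\<beta>1 < t\<close> \<open>t < \<beta>2\<close> by auto
  qed
  then obtain c h where ch: "c \<in> cantor_set" "u < c" "c < v" "\<beta>1 < h" "h < \<beta>2" "(c,h) \<notin> F"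
    by blast
  then obtain d where d: "d > 0" "ball (c,h) d \<inter> F = {}"
  proof -
    have "open (- F)" using assms(1) by (simp add: closed_def)
    then obtain d where "d > 0" "ball (c,h) d \<subseteq> - F" using ch(6) open_contains_ball by blast
    then show ?thesis using that by blast
  qed
  define d' where "d' = min (d/2) (min (c - u) (v - c))"
  have d': "d' > 0" using d ch unfolding d'_def by auto
  obtain u' where u': "c - d' < u'" "u' < c" "u' \<notin> cantor_set" using exists_below[OF d'] by blast
  obtain v' where v': "c < v'" "v' < c + d'" "v' \<notin> cantor_set" using exists_above[OF d'] by blast
  have "\<forall>c'. u' \<le> c' \<and> c' \<le> v' \<longrightarrow> (c',h) \<notin> F"
  proof (intro allI impI)
    fix c' assume "u' \<le> c' \<and> c' \<le> v'"
    then have "c - d < c'" "c' < c + d" using u' v' d unfolding d'_def by auto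
    then have "dist (c,h) (c',h) < d"
      by (simp add: dist_Pair_Pair dist_real_def abs_less_iff)
    then show "(c',h) \<notin> F" using d by auto
  qed
  moreover have "u \<le> u'" "v' \<le> v" using u' v' unfolding d'_def by auto
  ultimately show ?thesis using u' v' ch by blast
qed


theorem theorem3p3:
  fixes X :: "(real \<times> real) set"
  assumes "X \<subseteq> cantor_set \<times> (UNIV :: real set)"
    and "cohesive (subtopology euclidean X)"
    and "almost_zero_dimensional (subtopology euclidean X)"
  shows "(top_of_set (cantor_set \<times> (UNIV :: real set))) interior_of
           ((top_of_set (cantor_set \<times> (UNIV :: real set))) closure_of X) = {}"
proof (rule ccontr)
  define Y where "Y = cantor_set \<times> (UNIV :: real set)"
  have XY: "X \<subseteq> Y" using assms(1) Y_def by simp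
  have clo: "top_of_set Y closure_of X = Y \<inter> closure X"
    using XY by (simp add: closure_of_subtopology Int_absorb1)
  assume "top_of_set (cantor_set \<times> (UNIV :: real set)) interior_of
           (top_of_set (cantor_set \<times> (UNIV :: real set)) closure_of X) \<noteq> {}"
  then obtain p where "p \<in> top_of_set Y interior_of (Y \<inter> closure X)"
    unfolding Y_def[symmetric] clo by blast
  then obtain T where T: "openin (top_of_set Y) T" "p \<in> T" "T \<subseteq> Y \<inter> closure X"
    unfolding interior_of_def by blast
  then obtain Op where Op: "open Op" "T = Y \<inter> Op" by (auto simp: openin_open)
  have dens: "\<forall>z\<in>Y \<inter> Op. z \<in> closure X" using T Op by blast
  have "p \<in> closure X" "p \<in> Op" using T Op by auto
  then obtain x where x: "x \<in> X" "x \<in> Op" using dense_pt Op(1) by blast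
  have topX: "topspace (top_of_set X) = X" by simp
  obtain N where N: "is_nbhd (top_of_set X) x N"
    "\<not> (\<exists>A. A \<noteq> {} \<and> A \<subseteq> N \<and> openin (top_of_set X) A \<and> closedin (top_of_set X) A)"
    using assms(2) x(1) unfolding cohesive_def topX by blast
  then obtain W where W: "openin (top_of_set X) W" "x \<in> W" "W \<subseteq> N"
    unfolding is_nbhd_def by blast
  then obtain O1 where O1: "open O1" "W = X \<inter> O1" by (auto simp: openin_open)
  have "open (Op \<inter> O1)" "x \<in> Op \<inter> O1" using O1 Op x W by auto
  then obtain e where e: "e > 0" "ball x e \<subseteq> Op \<inter> O1" using open_contains_ball by blast
  obtain c0 t0 where x0: "x = (c0,t0)" by fastforce
  define r where "r = e/2"
  have r: "r > 0" using e r_def by simp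
  have inbox: "(c,t) \<in> Op \<inter> O1" if "\<bar>c - c0\<bar> < r" "\<bar>t - t0\<bar> < r" for c t
  proof -
    have "dist (c,t) (c0,t0) < 2*r" using dist_box that by blast
    then have "(c,t) \<in> ball x e" using r_def x0 by (simp add: dist_commute)
    then show ?thesis using e by blast
  qed
  define N2 where "N2 = X \<inter> ({c0-r<..<c0+r} \<times> {t0-r/2<..<t0+r/2})"
  have "openin (top_of_set X) N2" unfolding N2_def
    by (intro openin_open_Int) (simp add: open_Times)
  moreover have "x \<in> N2" using x r unfolding N2_def x0 by auto
  ultimately have "is_nbhd (top_of_set X) x N2" unfolding is_nbhd_def N2_def by auto
  then obtain V where V: "C_set (top_of_set X) V" "is_nbhd (top_of_set X) x V" "V \<subseteq> N2"
    using assms(3) x(1) unfolding almost_zero_dimensional_def topX by blast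
  obtain \<F> where FF: "\<forall>U\<in>\<F>. openin (top_of_set X) U \<and> closedin (top_of_set X) U" "V = X \<inter> \<Inter>\<F>"
    using V(1) unfolding C_set_def topX by blast
  obtain W2 where W2: "openin (top_of_set X) W2" "x \<in> W2" "W2 \<subseteq> V"
    using V(2) unfolding is_nbhd_def by blast
  then obtain O2 where O2: "open O2" "W2 = X \<inter> O2" by (auto simp: openin_open)
  then obtain e2 where e2: "e2 > 0" "ball x e2 \<subseteq> O2" using W2 open_contains_ball by blast
  define sg where "sg = min (r/2) (e2/2)"
  have s: "sg > 0" "sg \<le> r/2" "2 * sg \<le> e2" using r e2 unfolding sg_def by auto
  have inV: "(c,t) \<in> V" if "(c,t) \<in> X" "\<bar>c - c0\<bar> < sg" "\<bar>t - t0\<bar> < sg" for c t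
  proof -
    have "dist (c,t) (c0,t0) < 2 * sg" using dist_box that by blast
    then have "(c,t) \<in> ball x e2" using s x0 by (simp add: dist_commute)
    then show ?thesis using e2 W2 O2 that by blast
  qed
  define F where "F = (\<Inter>U\<in>\<F>. closure U)"
  have Fc: "closed F" unfolding F_def by (simp add: closed_INT)
  have FX: "y \<in> V" if yX: "y \<in> X" and yF: "y \<in> F" for y
  proof (rule ccontr)
    assume "y \<notin> V"
    then obtain U where U: "U \<in> \<F>" "y \<notin> U" using FF(2) yX by blast
    then obtain S where S: "closed S" "U = X \<inter> S" using FF(1) by (auto simp: closedin_closed)
    then have "closure U \<subseteq> S" by (simp add: closure_minimal)
    then have "y \<notin> closure U" using S U yX by blast
    then show False using yF U unfolding F_def by blast
  qed
  have Fband: "\<forall>c t. (c,t) \<in> X \<inter> F \<longrightarrow> t0 - r/2 < t \<and> t < t0 + r/2"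
  proof (intro allI impI)
    fix c t assume "(c,t) \<in> X \<inter> F"
    then have "(c,t) \<in> N2" using FX V(3) by blast
    then show "t0 - r/2 < t \<and> t < t0 + r/2" unfolding N2_def by auto
  qed
  obtain u1 where u1: "c0 - sg < u1" "u1 < c0" "u1 \<notin> cantor_set" using exists_below[OF s(1)] by blast
  obtain v1 where v1: "c0 < v1" "v1 < c0 + sg" "v1 \<notin> cantor_set" using exists_above[OF s(1)] by blast
  have c0C: "c0 \<in> cantor_set" using x XY x0 Y_def by auto
  have box1: "{u1<..<v1} \<times> {t0 + r/2<..<t0 + r} \<subseteq> Op"
  proof
    fix z assume "z \<in> {u1<..<v1} \<times> {t0 + r/2<..<t0 + r}"
    then obtain c t where "z = (c,t)" "u1 < c" "c < v1" "t0 + r/2 < t" "t < t0 + r" by auto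
    then show "z \<in> Op" using inbox[of c t] u1 v1 s r by (auto simp: abs_less_iff)
  qed
  obtain u2 v2 h c2 where g1: "u1 \<le> u2" "u2 < c2" "c2 < v2" "v2 \<le> v1" "u2 \<notin> cantor_set" "v2 \<notin> cantor_set"
     "c2 \<in> cantor_set" "t0 + r/2 < h" "h < t0 + r" "\<forall>c. u2 \<le> c \<and> c \<le> v2 \<longrightarrow> (c,h) \<notin> F"
  proof -
    have b1: "\<forall>c t. (c,t) \<in> X \<inter> F \<longrightarrow> t \<notin> {t0 + r/2<..<t0 + r}"
    proof (intro allI impI)
      fix c t assume "(c,t) \<in> X \<inter> F"
      then have "t0 - r/2 < t \<and> t < t0 + r/2" using Fband by blast
      then show "t \<notin> {t0 + r/2<..<t0 + r}" by auto
    qed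
    have "t0 + r/2 < t0 + r" using r by simp
    from gap[OF Fc Op(1) u1(3) v1(3) c0C u1(2) v1(1) this box1 dens[unfolded Y_def] assms(1) b1]
    show ?thesis using that by blast
  qed
  have box2: "{u2<..<v2} \<times> {t0 - r<..<t0 - r/2} \<subseteq> Op"
  proof
    fix z assume "z \<in> {u2<..<v2} \<times> {t0 - r<..<t0 - r/2}"
    then obtain c t where "z = (c,t)" "u2 < c" "c < v2" "t0 - r < t" "t < t0 - r/2" by auto
    then show "z \<in> Op" using inbox[of c t] u1 v1 g1 s r by (auto simp: abs_less_iff)
  qed
  obtain u3 v3 l c3 where g2: "u2 \<le> u3" "u3 < c3" "c3 < v3" "v3 \<le> v2" "u3 \<notin> cantor_set" "v3 \<notin> cantor_set"
     "c3 \<in> cantor_set" "t0 - r < l" "l < t0 - r/2" "\<forall>c. u3 \<le> c \<and> c \<le> v3 \<longrightarrow> (c,l) \<notin> F"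
  proof -
    have b1: "\<forall>c t. (c,t) \<in> X \<inter> F \<longrightarrow> t \<notin> {t0 - r<..<t0 - r/2}"
    proof (intro allI impI)
      fix c t assume "(c,t) \<in> X \<inter> F"
      then have "t0 - r/2 < t \<and> t < t0 + r/2" using Fband by blast
      then show "t \<notin> {t0 - r<..<t0 - r/2}" by auto
    qed
    have "t0 - r < t0 - r/2" using r by simp
    from gap[OF Fc Op(1) g1(5,6,7,2,3) this box2 dens[unfolded Y_def] assms(1) b1]
    show ?thesis using that by blast
  qed
  define S where "S = (cantor_set \<inter> {u3..v3}) \<times> {l,h}"
  have Sc: "compact S" unfolding S_def
    by (intro compact_Times closed_Int_compact cantor_closed) auto
  have SF: "S \<inter> F = {}" using g1(10) g2(1,4,10) unfolding S_def by auto
  have Scov: "S \<subseteq> (\<Union>U\<in>\<F>. - closure U)" using SF unfolding F_def by blast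
  obtain \<G> where G: "\<G> \<subseteq> \<F>" "finite \<G>" "S \<subseteq> (\<Union>U\<in>\<G>. - closure U)"
    using compactE_image[OF Sc _ Scov] by (metis open_Compl closed_closure)
  have "(c3,h) \<in> S" using g2 unfolding S_def by auto
  then have Gne: "\<G> \<noteq> {}" using G(3) by blast
  define Us where "Us = \<Inter>\<G>"
  have Uso: "openin (top_of_set X) Us" unfolding Us_def using G Gne FF(1) by blast
  have Usc: "closedin (top_of_set X) Us" unfolding Us_def using G Gne FF(1) by blast
  have UsX: "Us \<subseteq> X" using Usc closedin_subset by force
  have UsS: "Us \<inter> S = {}"
  proof -
    { fix z assume z: "z \<in> Us" "z \<in> S"
      then obtain U where "U \<in> \<G>" "z \<notin> closure U" using G(3) by blast
      moreover have "z \<in> U" using z \<open>U \<in> \<G>\<close> unfolding Us_def by blast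
      ultimately have False using closure_subset by blast }
    then show ?thesis by blast
  qed
  have VUs: "V \<subseteq> Us" using FF(2) G(1) unfolding Us_def by blast
  define A where "A = Us \<inter> ({u3<..<v3} \<times> {l<..<h})"
  have Ao: "openin (top_of_set X) A" unfolding A_def
    using Uso by (intro openin_Int_open) (simp_all add: open_Times)
  have Aeq: "A = Us \<inter> ({u3..v3} \<times> {l..h})"
  proof
    show "A \<subseteq> Us \<inter> ({u3..v3} \<times> {l..h})" unfolding A_def by auto
  next
    show "Us \<inter> ({u3..v3} \<times> {l..h}) \<subseteq> A"
    proof
      fix z assume z: "z \<in> Us \<inter> ({u3..v3} \<times> {l..h})"
      obtain c t where ct: "z = (c,t)" by fastforce
      have cC: "c \<in> cantor_set" using z UsX assms(1) ct by auto
      then have "c \<noteq> u3" "c \<noteq> v3" using g2 by auto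
      moreover have "t \<noteq> l" "t \<noteq> h" using z UsS cC ct unfolding S_def by auto
      ultimately show "z \<in> A" using z ct unfolding A_def by auto
    qed
  qed
  have "A = Us \<inter> (X \<inter> ({u3..v3} \<times> {l..h}))" using Aeq UsX by blast
  moreover have "closedin (top_of_set X) (X \<inter> ({u3..v3} \<times> {l..h}))"
    by (intro closedin_closed_Int closed_Times) auto
  ultimately have Ac: "closedin (top_of_set X) A" using Usc by (simp add: closedin_Int)
  have AN: "A \<subseteq> N"
  proof
    fix z assume z: "z \<in> A"
    obtain c t where ct: "z = (c,t)" by fastforce
    have "\<bar>c - c0\<bar> < r" "\<bar>t - t0\<bar> < r" using z ct g1 g2 u1 v1 s unfolding A_def by (auto simp: abs_less_iff)
    then have "z \<in> O1" using inbox ct by blast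
    then show "z \<in> N" using z UsX O1 W unfolding A_def by blast
  qed
  have Ane: "A \<noteq> {}"
  proof -
    define G0 where "G0 = ({u3<..<v3} \<times> {t0 - sg<..<t0 + sg}) \<inter> Op"
    have "open G0" unfolding G0_def using Op by (simp add: open_Times open_Int)
    have "\<bar>c3 - c0\<bar> < r" using g1 g2 u1 v1 s by (auto simp: abs_less_iff)
    then have "(c3,t0) \<in> Op" using inbox r by auto
    then have z0: "(c3,t0) \<in> G0" "(c3,t0) \<in> Y \<inter> Op" using g2 s unfolding G0_def Y_def by auto
    then obtain y where y: "y \<in> X" "y \<in> G0" using dense_pt dens \<open>open G0\<close> by blast
    obtain c t where ct: "y = (c,t)" by fastforce
    have "\<bar>c - c0\<bar> < sg" "\<bar>t - t0\<bar> < sg" using y ct g1 g2 u1 v1 unfolding G0_def by (auto simp: abs_less_iff)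
    then have "y \<in> V" using inV y ct by blast
    moreover have "u3 < c" "c < v3" "l < t" "t < h" using y ct g1 g2 s \<open>\<bar>t - t0\<bar> < sg\<close>
      unfolding G0_def by (auto simp: abs_less_iff)
    ultimately have "y \<in> A" using VUs ct unfolding A_def by auto
    then show ?thesis by blast
  qed
  show False using N(2) Ane AN Ao Ac by blast
qed

end
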